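(* Let $\lambda>0$, $\eta>0$ and $t>0$ be given. Then $$\big\||t\xi^2|^{\lambda}e^{\eta(|\xi|-\xi^2)t}\big\|_{L^\infty_\xi(\mathbb{R})}\le C_\lambda f_\lambda(t),\qquad f_\lambda(t)=\big(t^\lambda+\eta^{-\lambda}\big)\,e^{\frac{\eta}{8}\left(t+t^{1/2}\sqrt{t+\frac{16\lambda}{\eta}}\right)},$$ where $C_\lambda>0$ depends only on $\lambda$, and $f_\lambda$ is a nondecreasing function on $(0,\infty)$. *)

theory Defs
  imports "HOL-Analysis.Analysis"
begin

definition f_lam :: "real \<Rightarrow> real \<Rightarrow> real \<Rightarrow> real" where
  "f_lam \<eta> lam t = (t powr lam + \<eta> powr (-lam)) *
     exp ((\<eta> / 8) * (t + sqrt t * sqrt (t + 16 * lam / \<eta>)))"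

end

theory Submission
  imports Defs
begin

lemma ypow_bound:
  fixes y lam :: real
  assumes "lam > 0" "y \<ge> 0"
  shows "y powr lam \<le> lam powr lam * exp y"
proof -
  have "y / lam + 1 \<le> exp (y / lam)" using exp_ge_add_one_self[of "y/lam"] by linarith
  hence "y \<le> lam * exp (y / lam)" using assms by (simp add: field_simps)
  hence "y powr lam \<le> (lam * exp (y / lam)) powr lam"
    using assms by (intro powr_mono2) auto
  also have "\<dots> = lam powr lam * exp y"
    using assms by (simp add: powr_mult exp_powr_real)
  finally show ?thesis .
qed

lemma f_ge:
  assumes "\<eta> > 0" "t > 0" "lam > 0"
  shows "t powr lam * exp (\<eta> * t / 4) \<le> f_lam \<eta> lam t"
    and "\<eta> powr (-lam) \<le> f_lam \<eta> lam t"
proof -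
  have s: "sqrt t * sqrt (t + 16 * lam / \<eta>) \<ge> t"
  proof -
    have "sqrt t * sqrt (t + 16 * lam / \<eta>) \<ge> sqrt t * sqrt t"
      using assms by (intro mult_left_mono) auto
    thus ?thesis using assms by simp
  qed
  have e: "exp (\<eta> * t / 4) \<le> exp ((\<eta> / 8) * (t + sqrt t * sqrt (t + 16 * lam / \<eta>)))"
    using s assms by (simp add: field_simps)
  have e1: "1 \<le> exp ((\<eta> / 8) * (t + sqrt t * sqrt (t + 16 * lam / \<eta>)))"
    using s assms by simp
  have p: "t powr lam \<ge> 0" "\<eta> powr (-lam) \<ge> 0" by auto
  show "t powr lam * exp (\<eta> * t / 4) \<le> f_lam \<eta> lam t"
    unfolding f_lam_def using e p by (intro mult_mono) auto
  show "\<eta> powr (-lam) \<le> f_lam \<eta> lam t"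
    proof -
    have "\<eta> powr (-lam) * 1 \<le> (t powr lam + \<eta> powr (-lam)) *
       exp ((\<eta> / 8) * (t + sqrt t * sqrt (t + 16 * lam / \<eta>)))"
      using e1 p by (intro mult_mono) auto
    thus ?thesis unfolding f_lam_def by simp
  qed
qed

theorem lemma2p2:
  fixes lam :: real
  assumes "lam > 0"
  shows "\<exists>C>0. (\<forall>\<eta>>0. \<forall>t>0. \<forall>\<xi>::real.
            \<bar>t * \<xi>\<^sup>2\<bar> powr lam * exp (\<eta> * (\<bar>\<xi>\<bar> - \<xi>\<^sup>2) * t) \<le> C * f_lam \<eta> lam t)
         \<and> (\<forall>\<eta>>0. mono_on {0<..} (f_lam \<eta> lam))"
proof (intro exI[of _ "4 powr lam + (2*lam) powr lam"] conjI allI impI)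
  show "0 < 4 powr lam + (2 * lam) powr lam" using assms by (simp add: add_pos_nonneg)
next
  fix \<eta> t \<xi> :: real
  assume eta: "\<eta> > 0" and t: "t > 0"
  define x where "x = \<bar>\<xi>\<bar>"
  have x0: "x \<ge> 0" and xsq: "\<xi>\<^sup>2 = x\<^sup>2" unfolding x_def by auto
  have F: "f_lam \<eta> lam t \<ge> 0" using f_ge(2)[OF eta t assms] by (smt (verit) powr_ge_zero)
  have Fa: "t powr lam * exp (\<eta> * t / 4) \<le> f_lam \<eta> lam t"
    and Fb: "\<eta> powr (-lam) \<le> f_lam \<eta> lam t" using f_ge[OF eta t assms] by auto
  let ?Q = "\<bar>t * \<xi>\<^sup>2\<bar> powr lam * exp (\<eta> * (\<bar>\<xi>\<bar> - \<xi>\<^sup>2) * t)"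
  have Q: "?Q = (t * x\<^sup>2) powr lam * exp (\<eta> * (x - x\<^sup>2) * t)"
    using t by (simp add: xsq x_def[symmetric])
  have "?Q \<le> 4 powr lam * f_lam \<eta> lam t \<or> ?Q \<le> (2*lam) powr lam * f_lam \<eta> lam t"
  proof (cases "x \<le> 2")
    case True
    have a: "(t * x\<^sup>2) powr lam \<le> (4 * t) powr lam"
      using t x0 True assms mult_mono[of x 2 x 2] by (intro powr_mono2) (auto simp: power2_eq_square intro!: mult_mono)
    have "0 \<le> (x-1/2)*(x-1/2)" by simp
    then have h: "x - x\<^sup>2 \<le> 1/4" by (simp add: power2_eq_square algebra_simps)
    have h2: "\<eta>*t*(x-x\<^sup>2) \<le> \<eta>*t*(1/4)" by (rule mult_left_mono) (use h eta t in auto)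
    then have b: "exp (\<eta> * (x - x\<^sup>2) * t) \<le> exp (\<eta> * t / 4)" by (simp add: mult_ac)
    have "?Q \<le> (4 * t) powr lam * exp (\<eta> * t / 4)"
      unfolding Q using a b by (intro mult_mono) auto
    also have "\<dots> = 4 powr lam * (t powr lam * exp (\<eta> * t / 4))"
      using t by (simp add: powr_mult)
    also have "\<dots> \<le> 4 powr lam * f_lam \<eta> lam t"
      using Fa by (intro mult_left_mono) auto
    finally show ?thesis by simp
  next
    case False
    define y where "y = \<eta> * t * x\<^sup>2 / 2"
    have y0: "y \<ge> 0" using eta t unfolding y_def by simp
    have "x*(x-2) \<ge> 0" using False x0 by simp
    hence "x - x\<^sup>2 \<le> - (x\<^sup>2 / 2)" by (simp add: algebra_simps power2_eq_square)
    hence "\<eta> * t * (x - x\<^sup>2) \<le> \<eta> * t * (- (x\<^sup>2 / 2))"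
      using eta t by (intro mult_left_mono) auto
    hence b: "exp (\<eta> * (x - x\<^sup>2) * t) \<le> exp (- y)"
      unfolding y_def by (simp add: mult_ac)
    have tx: "t * x\<^sup>2 = (2 / \<eta>) * y" using eta unfolding y_def by simp
    have "(t * x\<^sup>2) powr lam = (2 / \<eta>) powr lam * y powr lam"
      unfolding tx by (rule powr_mult)
    also have "\<dots> \<le> (2 / \<eta>) powr lam * (lam powr lam * exp y)"
      using ypow_bound[OF assms y0] by (intro mult_left_mono) auto
    finally have a: "(t * x\<^sup>2) powr lam \<le> (2 / \<eta>) powr lam * (lam powr lam * exp y)" .
    have "?Q \<le> (2 / \<eta>) powr lam * (lam powr lam * exp y) * exp (- y)"
      unfolding Q using a b by (intro mult_mono) auto
    also have "\<dots> = (2 * lam) powr lam * \<eta> powr (-lam)"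
    proof -
      have e: "exp y * exp (- y) = 1" by (simp add: exp_minus)
      have "(2 / \<eta>) powr lam * (lam powr lam * exp y) * exp (- y) = (2 powr lam / \<eta> powr lam) * lam powr lam * (exp y * exp (- y))"
        using eta by (simp add: powr_divide mult_ac)
      also have "\<dots> = (2 powr lam * lam powr lam) * (1 / \<eta> powr lam)" using e by simp
      also have "\<dots> = (2 * lam) powr lam * \<eta> powr (-lam)" by (simp add: powr_mult powr_minus_divide)
      finally show ?thesis .
    qed
    also have "\<dots> \<le> (2*lam) powr lam * f_lam \<eta> lam t"
      using Fb by (intro mult_left_mono) auto
    finally show ?thesis by simp
  qed
  moreover have "4 powr lam * f_lam \<eta> lam t \<le> (4 powr lam + (2 * lam) powr lam) * f_lam \<eta> lam t"
    "(2*lam) powr lam * f_lam \<eta> lam t \<le> (4 powr lam + (2 * lam) powr lam) * f_lam \<eta> lam t"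
    using F by (auto intro!: mult_right_mono)
  ultimately show "?Q \<le> (4 powr lam + (2 * lam) powr lam) * f_lam \<eta> lam t" by linarith
next
  fix \<eta> :: real assume eta: "\<eta> > 0"
  show "mono_on {0<..} (f_lam \<eta> lam)"
  proof (rule mono_onI)
    fix r s :: real assume r: "r \<in> {0<..}" and s: "s \<in> {0<..}" and rs: "r \<le> s"
    have c: "0 \<le> 16 * lam / \<eta>" using eta assms by simp
    have "sqrt r * sqrt (r + 16 * lam / \<eta>) \<le> sqrt s * sqrt (s + 16 * lam / \<eta>)"
      using r s rs c by (intro mult_mono) auto
    hence e: "exp ((\<eta> / 8) * (r + sqrt r * sqrt (r + 16 * lam / \<eta>)))
        \<le> exp ((\<eta> / 8) * (s + sqrt s * sqrt (s + 16 * lam / \<eta>)))"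
      using rs eta by (simp add: mult_left_mono)
    have p: "r powr lam + \<eta> powr (-lam) \<le> s powr lam + \<eta> powr (-lam)"
      using r rs assms by (simp add: powr_mono2)
    show "f_lam \<eta> lam r \<le> f_lam \<eta> lam s"
      unfolding f_lam_def using e p r
      by (intro mult_mono) (auto intro: add_nonneg_nonneg)
  qed
qed

end
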